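(* Let $(\mathfrak A,\alpha,\omega)$ be an ergodic $C^*$-dynamical system with GNS covariant representation $(\mathcal H,\pi,U,\Omega)$ such that the support of $\omega$ in $\mathfrak A^{**}$ is central. With $M,M',\mathfrak M,\mathfrak N,\varphi,\psi,\gamma$ as in the context, the state $\psi$ is generic for $(\mathfrak M,\gamma,\varphi)$ w.r.t. $\mathfrak N$, i.e. $\lim_{N\to\infty}\frac1N\sum_{n=0}^{N-1}\psi(\gamma^n(X))=\varphi(X)$ for every $X\in\mathfrak N$.
   Context: A $C^*$-dynamical system $(\mathfrak A,\alpha,\omega)$: $C^*$-algebra $\mathfrak A$, automorphism $\alpha$, $\alpha$-invariant state $\omega$; ergodic means $\lim_N\frac1N\sum_{n=0}^{N-1}\omega(A\alpha^n(B))=\omega(A)\omega(B)$ for all $A,B$ (equivalently the $U$-invariant vectors are $\mathbb C\Omega$). $(\mathcal H,\pi,\Omega)$ is the GNS triple of $\omega$ and $U$ the unitary with $U\pi(A)\Omega=\pi(\alpha(A))\Omega$. Central support is equivalent to $\Omega$ being separating for $M:=\pi(\mathfrak A)''$; $M'$ is the commutant. $\mathfrak N:=M\otimes M'$ is the algebraic tensor product and $\mathfrak M:=M\otimes_{\max}M'$ its completion in the maximal $C^*$-norm. $\varphi$ is the state on $\mathfrak M$ with $\varphi(A\otimes B)=\langle A\Omega,\Omega\rangle\langle B\Omega,\Omega\rangle$ and $\psi$ the state on $\mathfrak M$ with $\psi(A\otimes B)=\langle AB\Omega,\Omega\rangle$ ($A\in M$, $B\in M'$). $\gamma:=\mathrm{Ad}_U\otimes\mathrm{Ad}_{U^2}$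 is the automorphism of $\mathfrak M$ with $\gamma(A\otimes B)=UAU^*\otimes U^2BU^{-2}$. *)

theory Defs
  imports "HOL-Analysis.Analysis"
begin

text \<open>Complex Hilbert spaces, modelled as real Hilbert spaces equipped with an
orthogonal complex structure cJ (multiplication by the imaginary unit).
Scalar multiplication: c x = Re c x + Im c (cJ x).\<close>

class complex_hilbert = real_inner + complete_space +
  fixes cJ :: "'a \<Rightarrow> 'a"
  assumes cJ_add: "cJ (x + y) = cJ x + cJ y"
    and cJ_scaleR: "cJ (r *\<^sub>R x) = r *\<^sub>R cJ x"
    and cJ_cJ: "cJ (cJ x) = - x"
    and cJ_inner: "inner (cJ x) (cJ y) = inner x y"

definition scaleC :: "complex \<Rightarrow> 'a::complex_hilbert \<Rightarrow> 'a" where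
  "scaleC c x = Re c *\<^sub>R x + Im c *\<^sub>R cJ x"

text \<open>Complex inner product, linear in the first, conjugate-linear in the second argument.\<close>
definition cinner :: "'a::complex_hilbert \<Rightarrow> 'a \<Rightarrow> complex" where
  "cinner x y = Complex (inner x y) (inner x (cJ y))"

definition bop :: "('a::complex_hilbert \<Rightarrow> 'a) \<Rightarrow> bool" where
  "bop T \<longleftrightarrow> bounded_linear T \<and> (\<forall>x. T (cJ x) = cJ (T x))"

definition unitary_op :: "('a::complex_hilbert \<Rightarrow> 'a) \<Rightarrow> bool" where
  "unitary_op U \<longleftrightarrow> bop U \<and> U \<circ> adjoint U = id \<and> adjoint U \<circ> U = id"

definition commutant :: "('a::complex_hilbert \<Rightarrow> 'a) set \<Rightarrow> ('a \<Rightarrow> 'a) set" where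
  "commutant S = {T. bop T \<and> (\<forall>A\<in>S. T \<circ> A = A \<circ> T)}"

definition concrete_cstar :: "('a::complex_hilbert \<Rightarrow> 'a) set \<Rightarrow> bool" where
  "concrete_cstar S \<longleftrightarrow>
     (\<forall>A\<in>S. bop A) \<and>
     (\<forall>A\<in>S. \<forall>B\<in>S. (\<lambda>x. A x + B x) \<in> S \<and> A \<circ> B \<in> S) \<and>
     (\<forall>c. \<forall>A\<in>S. (\<lambda>x. scaleC c (A x)) \<in> S) \<and>
     (\<forall>A\<in>S. adjoint A \<in> S) \<and>
     (\<forall>T X. (\<forall>n. X n \<in> S) \<and> bop T \<and> (\<lambda>n. onorm (\<lambda>x. X n x - T x)) \<longlonglongrightarrow> 0
            \<longrightarrow> T \<in> S)"

end

theory Submission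
  imports Defs
begin


lemma quad_zero:
  fixes a b :: real
  assumes "\<forall>t. 0 \<le> 2*t*a + t^2*b" "b \<ge> 0"
  shows "a = 0"
proof (rule ccontr)
  assume "a \<noteq> 0"
  define t where "t = - a/(b+1)"
  have "0 \<le> 2*t*a + t^2*b" using assms by auto
  hence "0 \<le> (2*t*a + t^2*b) * (b+1)^2" using assms by simp
  also have "(2*t*a + t^2*b) * (b+1)^2 = 2*a*(t*(b+1))*(b+1) + (t*(b+1))^2*b"
    by (simp add: power2_eq_square algebra_simps)
  also have "t*(b+1) = -a" using assms(2) by (simp add: t_def)
  also have "2*a*(-a)*(b+1) + (-a)^2*b = -(a^2 * (b+2))"
    by (simp add: power2_eq_square algebra_simps)
  finally have "a^2 * (b+2) \<le> 0" by simp
  moreover have "a^2 * (b+2) > 0" using \<open>a \<noteq> 0\<close> assms(2) by simp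
  ultimately show False by simp
qed

lemma riesz:
  fixes f :: "'a::{real_inner,complete_space} \<Rightarrow> real"
  assumes bl: "bounded_linear f"
  shows "\<exists>z. \<forall>x. f x = inner z x"
proof (cases "\<forall>x. f x = 0")
  case True then show ?thesis by (intro exI[of _ 0]) simp
next
  case False
  interpret f: bounded_linear f by (rule bl)
  obtain x0 where x0: "f x0 \<noteq> 0" using False by blast
  define S where "S = {x. f x = 1}"
  have x1S: "x0 /\<^sub>R f x0 \<in> S" using x0 by (simp add: S_def f.scaleR)
  define d where "d = Inf (norm ` S)"
  have bdd: "bdd_below (norm ` S)" by (rule bdd_belowI[of _ 0]) auto
  have d_le: "d \<le> norm x" if "x \<in> S" for x
    unfolding d_def using bdd that by (simp add: cInf_lower)
  have d_ge: "d \<ge> 0" unfolding d_def using x1S by (intro cInf_greatest) auto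
  have "\<exists>x\<in>S. norm x < d + inverse (real (Suc n))" for n
  proof -
    have "Inf (norm ` S) < d + inverse (real (Suc n))" unfolding d_def by simp
    then obtain y where "y \<in> norm ` S" "y < d + inverse (real (Suc n))"
      using cInf_lessD[of "norm ` S"] x1S by blast
    then show ?thesis by auto
  qed
  then obtain xs where xsS: "\<And>n. xs n \<in> S" and xsn: "\<And>n. norm (xs n) < d + inverse (real (Suc n))"
    by metis
  define K where "K = 2*d+1"
  have K: "K > 0" using d_ge by (simp add: K_def)
  have sq: "norm (xs n)^2 \<le> d^2 + K * inverse (real (Suc n))" for n
  proof -
    define e where "e = inverse (real (Suc n))"
    have e0: "0 < e" "e \<le> 1" by (auto simp: e_def field_simps)
    have "norm (xs n)^2 \<le> (d + e)^2"
      using xsn[of n] by (intro power_mono) (auto simp: e_def)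
    also have "\<dots> = d^2 + 2*d*e + e*e" by (simp add: power2_eq_square algebra_simps)
    also have "\<dots> \<le> d^2 + 2*d*e + e" using e0 by (simp add: mult_left_le)
    finally show ?thesis by (simp add: K_def e_def algebra_simps)
  qed
  have par: "norm (a - b)^2 = 2 * norm a^2 + 2 * norm b^2 - norm (a+b)^2" for a b :: 'a
    by (simp add: power2_norm_eq_inner inner_diff_left inner_diff_right inner_add_left inner_add_right inner_commute)
  have midS: "(1/2) *\<^sub>R (xs n + xs m) \<in> S" for n m
    using xsS[of n] xsS[of m] by (simp add: S_def f.scaleR f.add)
  have dist_bd: "norm (xs n - xs m)^2 \<le> 2*K*inverse (real (Suc n)) + 2*K*inverse (real (Suc m))" for n m
  proof -
    have "d \<le> norm ((1/2) *\<^sub>R (xs n + xs m))" by (rule d_le[OF midS])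
    hence "2*d \<le> norm (xs n + xs m)" by simp
    hence "(2*d)^2 \<le> norm (xs n + xs m)^2" using d_ge by (intro power_mono) auto
    thus ?thesis using par[of "xs n" "xs m"] sq[of n] sq[of m] by (simp add: power2_eq_square)
  qed
  have "Cauchy xs"
  proof (rule metric_CauchyI)
    fix e :: real assume e: "e > 0"
    obtain M :: nat where M: "4*K/e^2 < real M" using reals_Archimedean2 by blast
    show "\<exists>M. \<forall>m\<ge>M. \<forall>n\<ge>M. dist (xs m) (xs n) < e"
    proof (intro exI allI impI)
      fix m n assume mn: "M \<le> m" "M \<le> n"
      have i1: "inverse (real (Suc m)) \<le> inverse (real (Suc M))" using mn by (simp add: field_simps)
      have i2: "inverse (real (Suc n)) \<le> inverse (real (Suc M))" using mn by (simp add: field_simps)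
      have "dist (xs m) (xs n)^2 \<le> 2*K*inverse (real (Suc m)) + 2*K*inverse (real (Suc n))"
        using dist_bd[of m n] by (simp add: dist_norm)
      also have "\<dots> \<le> 4*K*inverse (real (Suc M))"
        using mult_left_mono[OF i1, of "2*K"] mult_left_mono[OF i2, of "2*K"] K by linarith
      also have "\<dots> < e^2"
      proof -
        have e2: "e^2 > 0" using e by simp
        have "4*K < real M * e^2" using M pos_divide_less_eq[OF e2] by blast
        also have "\<dots> \<le> real (Suc M) * e^2" using e2 by simp
        finally have h: "4*K < real (Suc M) * e^2" .
        have "4*K*inverse (real (Suc M)) = 4*K / real (Suc M)" by (simp add: divide_inverse)
        also have "\<dots> < e^2" using h by (subst pos_divide_less_eq) (auto simp: mult.commute)
        finally show ?thesis .
      qed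
      finally show "dist (xs m) (xs n) < e"
        using e power2_less_imp_less by fastforce
    qed
  qed
  from Cauchy_convergent[OF this] obtain w where w: "xs \<longlonglongrightarrow> w" unfolding convergent_def by blast
  have c1: "(\<lambda>n. f (xs n)) \<longlonglongrightarrow> f w" by (rule f.tendsto[OF w])
  have "(\<lambda>n. f (xs n)) = (\<lambda>n. 1)" using xsS by (auto simp: S_def)
  with c1 have "(\<lambda>n. 1::real) \<longlonglongrightarrow> f w" by simp
  hence fw: "f w = 1" using LIMSEQ_unique[OF _ tendsto_const] by metis
  have "norm w \<le> d"
  proof (rule LIMSEQ_le)
    show "(\<lambda>n. norm (xs n)) \<longlonglongrightarrow> norm w" by (intro tendsto_intros w)
    show "(\<lambda>n. d + inverse (real (Suc n))) \<longlonglongrightarrow> d"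
      using tendsto_add[OF tendsto_const LIMSEQ_inverse_real_of_nat, of d] by simp
    show "\<exists>N. \<forall>n\<ge>N. norm (xs n) \<le> d + inverse (real (Suc n))" using xsn less_imp_le by blast
  qed
  hence wmin: "norm w \<le> norm x" if "x \<in> S" for x using d_le[OF that] by simp
  have orth: "inner w k = 0" if k: "f k = 0" for k
  proof (rule quad_zero)
    show "\<forall>t. 0 \<le> 2*t*inner w k + t^2*inner k k"
    proof
      fix t :: real
      have "w + t *\<^sub>R k \<in> S" using fw k by (simp add: S_def f.add f.scaleR)
      hence "norm w^2 \<le> norm (w + t *\<^sub>R k)^2" using wmin by (simp add: power_mono)
      hence "inner w w \<le> inner (w + t *\<^sub>R k) (w + t *\<^sub>R k)" by (simp add: power2_norm_eq_inner)
      thus "0 \<le> 2*t*inner w k + t^2*inner k k"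
        by (simp add: inner_add_left inner_add_right inner_commute[of k w] power2_eq_square algebra_simps)
    qed
    show "0 \<le> inner k k" by simp
  qed
  have w0: "inner w w \<noteq> 0" using fw by auto
  show ?thesis
  proof (intro exI allI)
    fix x
    have "f (x - f x *\<^sub>R w) = 0" using fw by (simp add: f.diff f.scaleR)
    hence "inner w (x - f x *\<^sub>R w) = 0" by (rule orth)
    hence "inner w x = f x * inner w w" by (simp add: inner_diff_right)
    thus "f x = inner (w /\<^sub>R inner w w) x" using w0 by simp
  qed
qed

lemma adjoint_prop:
  fixes T :: "'a::{real_inner,complete_space} \<Rightarrow> 'a"
  assumes "bounded_linear T"
  shows "inner (T x) y = inner x (adjoint T y)"
proof -
  have "\<forall>y. \<exists>z. \<forall>x. inner (T x) y = inner z x"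
    using riesz[OF bounded_linear_compose[OF bounded_linear_inner_left assms]] by auto
  then obtain g where g: "\<And>y x. inner (T x) y = inner (g y) x" by metis
  have "adjoint T = g" by (rule adjoint_unique) (metis g inner_commute)
  thus ?thesis by (metis g inner_commute)
qed



lemma cJ_skew: "inner (cJ a) b = - inner a (cJ (b::'a::complex_hilbert))"
proof -
  have "inner (cJ a) b = inner (cJ (cJ a)) (cJ b)" by (simp add: cJ_inner)
  also have "\<dots> = - inner a (cJ b)" by (simp add: cJ_cJ)
  finally show ?thesis .
qed

lemma bop_adj:
  fixes T :: "'a::complex_hilbert \<Rightarrow> 'a"
  assumes "bop T"
  shows "cinner (T x) y = cinner x (adjoint T y)"
proof -
  have bl: "bounded_linear T" and c: "\<And>x. T (cJ x) = cJ (T x)" using assms by (auto simp: bop_def)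
  have ad: "\<And>x y. inner (T x) y = inner x (adjoint T y)" by (rule adjoint_prop[OF bl])
  have "inner z (adjoint T (cJ y)) = inner z (cJ (adjoint T y))" for z
  proof -
    have "inner z (adjoint T (cJ y)) = inner (T z) (cJ y)" by (simp add: ad)
    also have "\<dots> = - inner (cJ (T z)) y" by (simp add: cJ_skew)
    also have "\<dots> = - inner (T (cJ z)) y" by (simp add: c)
    also have "\<dots> = - inner (cJ z) (adjoint T y)" by (simp add: ad)
    also have "\<dots> = inner z (cJ (adjoint T y))" by (simp add: cJ_skew)
    finally show ?thesis .
  qed
  hence "adjoint T (cJ y) = cJ (adjoint T y)" using vector_eq_ldot by blast
  thus ?thesis by (simp add: cinner_def ad)
qed

lemma dense_ext:
  fixes F :: "nat \<Rightarrow> 'a::real_normed_vector \<Rightarrow> real" and G :: "'a \<Rightarrow> real"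
  assumes D: "closure D = UNIV" and conv: "\<forall>d\<in>D. (\<lambda>N. F N d) \<longlonglongrightarrow> G d"
    and LF: "\<forall>N a b. \<bar>F N a - F N b\<bar> \<le> C * norm (a - b)"
    and LG: "\<forall>a b. \<bar>G a - G b\<bar> \<le> C * norm (a - b)" and C0: "C \<ge> 0"
  shows "(\<lambda>N. F N x) \<longlonglongrightarrow> G x"
proof (rule LIMSEQ_I)
  fix r :: real assume r: "r > 0"
  define \<delta> where "\<delta> = r / (3 * (C + 1))"
  have \<delta>: "\<delta> > 0" using r C0 by (simp add: \<delta>_def)
  have "x \<in> closure D" using D by simp
  then obtain d where d: "d \<in> D" "dist d x < \<delta>" using \<delta> closure_approachable by metis
  have Cd: "C * norm (x - d) \<le> r/3"
  proof -
    have "C * norm (x - d) \<le> C * \<delta>" using d(2) C0 by (intro mult_left_mono) (auto simp: dist_norm norm_minus_commute)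
    also have "\<dots> \<le> (C+1) * \<delta>" using \<delta> by simp
    also have "\<dots> = r/3" using C0 by (simp add: \<delta>_def field_simps)
    finally show ?thesis .
  qed
  have Cd': "C * norm (d - x) \<le> r/3" using Cd by (simp add: norm_minus_commute)
  from conv d(1) have "(\<lambda>N. F N d) \<longlonglongrightarrow> G d" by blast
  then obtain no where no: "\<And>n. n \<ge> no \<Longrightarrow> norm (F n d - G d) < r/3"
    using LIMSEQ_D[of "\<lambda>N. F N d" "G d" "r/3"] r by auto
  show "\<exists>no. \<forall>n\<ge>no. norm (F n x - G x) < r"
  proof (intro exI allI impI)
    fix n assume "n \<ge> no"
    hence a: "\<bar>F n d - G d\<bar> < r/3" using no by auto
    have b: "\<bar>F n x - F n d\<bar> \<le> r/3" using LF Cd by (meson order_trans)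
    have c: "\<bar>G d - G x\<bar> \<le> r/3" using LG Cd' by (meson order_trans)
    have t: "\<bar>F n x - G x\<bar> \<le> \<bar>F n x - F n d\<bar> + \<bar>F n d - G d\<bar> + \<bar>G d - G x\<bar>"
      using abs_triangle_ineq[of "F n x - F n d" "F n d - G d"] abs_triangle_ineq[of "F n x - G d" "G d - G x"] by simp
    show "norm (F n x - G x) < r" using a b c t by simp
  qed
qed

context
  fixes \<A> :: "('h::complex_hilbert \<Rightarrow> 'h) set"
    and U :: "'h \<Rightarrow> 'h"
    and \<Omega> :: 'h
  assumes cstar: "concrete_cstar \<A>"
    and unit_vec: "norm \<Omega> = 1"
    and cyclic: "closure {A \<Omega> | A. A \<in> \<A>} = UNIV"
    and unitary: "unitary_op U"
    and inv_vec: "U \<Omega> = \<Omega>"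
    and ergodic: "\<forall>A\<in>\<A>. \<forall>B\<in>\<A>.
        (\<lambda>N. (\<Sum>n<N. cinner (A ((U^^n) (B \<Omega>))) \<Omega>) / of_nat N)
          \<longlonglongrightarrow> cinner (A \<Omega>) \<Omega> * cinner (B \<Omega>) \<Omega>"
begin

lemma U_bop: "bop U" using unitary by (simp add: unitary_op_def)
lemma U_bl: "bounded_linear U" using U_bop by (simp add: bop_def)
lemma UV: "U (adjoint U x) = x" using unitary by (simp add: unitary_op_def fun_eq_iff)
lemma VU: "adjoint U (U x) = x" using unitary by (simp add: unitary_op_def fun_eq_iff)
lemma V_Omega: "adjoint U \<Omega> = \<Omega>" using VU[of \<Omega>] inv_vec by simp
lemma Vn_Omega: "(adjoint U ^^ m) \<Omega> = \<Omega>" by (induction m) (auto simp: V_Omega)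
lemma VnUn: "(adjoint U ^^ n) ((U ^^ n) z) = z"
proof (induction n arbitrary: z)
  case (Suc n)
  have e1: "(U ^^ Suc n) z = U ((U^^n) z)" by simp
  have e2: "(adjoint U ^^ Suc n) w = (adjoint U ^^ n) (adjoint U w)" for w
    by (simp add: funpow_Suc_right del: funpow.simps)
  show ?case by (simp only: e1 e2 VU Suc.IH)
qed simp
lemma VnU2n: "(adjoint U ^^ n) ((U ^^ (2*n)) z) = (U^^n) z"
proof -
  have "(U ^^ (2*n)) z = (U^^n) ((U^^n) z)" by (simp add: mult_2 funpow_add)
  thus ?thesis by (simp add: VnUn)
qed
lemma Un_cinner: "cinner ((U^^n) z) \<Omega> = cinner z \<Omega>"
  by (induction n) (auto simp: bop_adj[OF U_bop] V_Omega)
lemma U_norm: "norm (U x) = norm x"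
proof -
  have "inner (U x) (U x) = inner x x" by (simp add: adjoint_prop[OF U_bl] VU)
  thus ?thesis by (simp add: norm_eq_sqrt_inner)
qed
lemma Un_norm: "norm ((U^^n) x) = norm x" by (induction n) (auto simp: U_norm)
lemma Un_bl: "bounded_linear (U^^n)"
  by (induction n) (auto simp: bounded_linear_ident[unfolded id_def] intro: bounded_linear_compose[OF U_bl])

definition T :: "nat \<Rightarrow> 'h \<Rightarrow> 'h" where
  "T N x = (1 / real N) *\<^sub>R (\<Sum>n<N. (U^^n) x)"

lemma T_diff: "T N (a - b) = T N a - T N b"
  by (simp add: T_def linear_diff[OF bounded_linear.linear[OF Un_bl]] sum_subtractf scaleR_diff_right)

lemma T_norm: "norm (T N x) \<le> norm x"
proof (cases "N = 0")
  case True then show ?thesis by (simp add: T_def)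
next
  case False
  have "norm (\<Sum>n<N. (U^^n) x) \<le> (\<Sum>n<N. norm ((U^^n) x))" by (rule norm_sum)
  also have "\<dots> = real N * norm x" by (simp add: Un_norm)
  finally show ?thesis using False by (simp add: T_def field_simps)
qed

lemma T_inner: "inner (T N x) y = (\<Sum>n<N. inner ((U^^n) x) y) / real N"
  by (simp add: T_def inner_sum_left)

definition l :: "'h \<Rightarrow> 'h \<Rightarrow> real" where
  "l x y = Re (cinner x \<Omega> * cinner \<Omega> y)"

lemma l_right: "l x y = inner x (inner \<Omega> y *\<^sub>R \<Omega> - inner \<Omega> (cJ y) *\<^sub>R cJ \<Omega>)"
  by (simp add: l_def cinner_def inner_diff_right)

lemma l_left: "l x y = inner (inner x \<Omega> *\<^sub>R \<Omega> + inner x (cJ \<Omega>) *\<^sub>R cJ \<Omega>) y"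
  by (simp add: l_def cinner_def inner_add_left cJ_skew)

lemma adj_adj:
  assumes "bounded_linear C" shows "adjoint (adjoint C) = (C::'h \<Rightarrow> 'h)"
proof (rule adjoint_unique, intro allI)
  fix x y
  have "inner (adjoint C x) y = inner y (adjoint C x)" by (rule inner_commute)
  also have "\<dots> = inner (C y) x" by (rule adjoint_prop[OF assms, symmetric])
  also have "\<dots> = inner x (C y)" by (rule inner_commute)
  finally show "inner (adjoint C x) y = inner x (C y)" .
qed

lemma A_bop: "A \<in> \<A> \<Longrightarrow> bop A" using cstar unfolding concrete_cstar_def by blast

lemma step1:
  assumes "A \<in> \<A>" "B \<in> \<A>"
  shows "(\<lambda>N. inner (T N (B \<Omega>)) (adjoint A \<Omega>)) \<longlonglongrightarrow> l (B \<Omega>) (adjoint A \<Omega>)"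
proof -
  have bA: "bop A" using A_bop assms by simp
  have blA: "bounded_linear A" using bA by (simp add: bop_def)
  have "(\<lambda>N. Re ((\<Sum>n<N. cinner (A ((U^^n) (B \<Omega>))) \<Omega>) / of_nat N))
          \<longlonglongrightarrow> Re (cinner (A \<Omega>) \<Omega> * cinner (B \<Omega>) \<Omega>)"
    using ergodic assms by (intro tendsto_Re) auto
  moreover have "Re ((\<Sum>n<N. cinner (A ((U^^n) (B \<Omega>))) \<Omega>) / of_nat N) = inner (T N (B \<Omega>)) (adjoint A \<Omega>)" for N
    by (simp add: T_inner cinner_def adjoint_prop[OF blA])
  moreover have "Re (cinner (A \<Omega>) \<Omega> * cinner (B \<Omega>) \<Omega>) = l (B \<Omega>) (adjoint A \<Omega>)"
    by (simp add: l_def bop_adj[OF bA] mult.commute)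
  ultimately show ?thesis by simp
qed

lemma step2: "closure {adjoint A \<Omega> | A. A \<in> \<A>} = UNIV"
proof -
  have "{A \<Omega> | A. A \<in> \<A>} \<subseteq> {adjoint A \<Omega> | A. A \<in> \<A>}"
  proof
    fix x assume "x \<in> {A \<Omega> | A. A \<in> \<A>}"
    then obtain C where C: "C \<in> \<A>" "x = C \<Omega>" by blast
    have a1: "adjoint C \<in> \<A>" using cstar C(1) unfolding concrete_cstar_def by blast
    have a2: "adjoint (adjoint C) = C" using A_bop[OF C(1)] unfolding bop_def by (intro adj_adj) simp
    have "x = adjoint (adjoint C) \<Omega> \<and> adjoint C \<in> \<A>" using a1 a2 C(2) by simp
    thus "x \<in> {adjoint A \<Omega> | A. A \<in> \<A>}" by (intro CollectI exI[of _ "adjoint C"])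
  qed
  hence "closure {A \<Omega> | A. A \<in> \<A>} \<subseteq> closure {adjoint A \<Omega> | A. A \<in> \<A>}" by (rule closure_mono)
  hence "UNIV \<subseteq> closure {adjoint A \<Omega> | A. A \<in> \<A>}" by (simp only: cyclic)
  thus ?thesis by (rule top.extremum_uniqueI)
qed

lemma step3:
  assumes "B \<in> \<A>"
  shows "(\<lambda>N. inner (T N (B \<Omega>)) y) \<longlonglongrightarrow> l (B \<Omega>) y"
proof -
  define x where "x = B \<Omega>"
  define v where "v = inner x \<Omega> *\<^sub>R \<Omega> + inner x (cJ \<Omega>) *\<^sub>R cJ \<Omega>"
  have lv: "l x a = inner v a" for a by (simp add: l_left v_def)
  have "(\<lambda>N. inner (T N x) y) \<longlonglongrightarrow> l x y"
  proof (rule dense_ext[OF step2, where C = "norm x + norm v" and F = "\<lambda>N a. inner (T N x) a" and G = "l x"])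
    show "\<forall>d\<in>{adjoint A \<Omega> | A. A \<in> \<A>}. (\<lambda>N. inner (T N x) d) \<longlonglongrightarrow> l x d"
      using step1 assms by (auto simp: x_def)
    show "\<forall>N a b. \<bar>inner (T N x) a - inner (T N x) b\<bar> \<le> (norm x + norm v) * norm (a - b)"
    proof (intro allI)
      fix N a b
      have "\<bar>inner (T N x) a - inner (T N x) b\<bar> = \<bar>inner (T N x) (a - b)\<bar>" by (simp add: inner_diff_right)
      also have "\<dots> \<le> norm (T N x) * norm (a - b)" by (rule Cauchy_Schwarz_ineq2)
      also have "\<dots> \<le> (norm x + norm v) * norm (a - b)"
      proof (intro mult_right_mono)
        show "norm (T N x) \<le> norm x + norm v" using T_norm[of N x] norm_ge_zero[of v] by linarith
      qed simp
      finally show "\<bar>inner (T N x) a - inner (T N x) b\<bar> \<le> (norm x + norm v) * norm (a - b)" .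
    qed
    show "\<forall>a b. \<bar>l x a - l x b\<bar> \<le> (norm x + norm v) * norm (a - b)"
    proof (intro allI)
      fix a b
      have "\<bar>l x a - l x b\<bar> = \<bar>inner v (a - b)\<bar>" by (simp add: lv inner_diff_right)
      also have "\<dots> \<le> norm v * norm (a - b)" by (rule Cauchy_Schwarz_ineq2)
      also have "\<dots> \<le> (norm x + norm v) * norm (a - b)" by (intro mult_right_mono) auto
      finally show "\<bar>l x a - l x b\<bar> \<le> (norm x + norm v) * norm (a - b)" .
    qed
  qed simp
  thus ?thesis by (simp add: x_def)
qed

lemma step4: "(\<lambda>N. inner (T N x) y) \<longlonglongrightarrow> l x y"
proof -
  define w where "w = inner \<Omega> y *\<^sub>R \<Omega> - inner \<Omega> (cJ y) *\<^sub>R cJ \<Omega>"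
  have lw: "l a y = inner a w" for a by (simp add: l_right w_def)
  show ?thesis
  proof (rule dense_ext[OF cyclic, where C = "norm y + norm w" and F = "\<lambda>N a. inner (T N a) y" and G = "\<lambda>a. l a y"])
    show "\<forall>d\<in>{A \<Omega> | A. A \<in> \<A>}. (\<lambda>N. inner (T N d) y) \<longlonglongrightarrow> l d y"
      using step3 by auto
    show "\<forall>N a b. \<bar>inner (T N a) y - inner (T N b) y\<bar> \<le> (norm y + norm w) * norm (a - b)"
    proof (intro allI)
      fix N a b
      have "\<bar>inner (T N a) y - inner (T N b) y\<bar> = \<bar>inner (T N (a - b)) y\<bar>" by (simp add: T_diff inner_diff_left)
      also have "\<dots> \<le> norm (T N (a - b)) * norm y" by (rule Cauchy_Schwarz_ineq2)
      also have "\<dots> \<le> norm (a - b) * norm y" using T_norm by (intro mult_right_mono) auto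
      also have "\<dots> \<le> (norm y + norm w) * norm (a - b)" using mult_nonneg_nonneg[of "norm (a-b)" "norm w"] by (simp add: algebra_simps)
      finally show "\<bar>inner (T N a) y - inner (T N b) y\<bar> \<le> (norm y + norm w) * norm (a - b)" .
    qed
    show "\<forall>a b. \<bar>l a y - l b y\<bar> \<le> (norm y + norm w) * norm (a - b)"
    proof (intro allI)
      fix a b
      have "\<bar>l a y - l b y\<bar> = \<bar>inner (a - b) w\<bar>" by (simp add: lw inner_diff_left)
      also have "\<dots> \<le> norm (a - b) * norm w" by (rule Cauchy_Schwarz_ineq2)
      also have "\<dots> \<le> (norm y + norm w) * norm (a - b)" using mult_nonneg_nonneg[of "norm (a-b)" "norm w"] by (simp add: algebra_simps)
      finally show "\<bar>l a y - l b y\<bar> \<le> (norm y + norm w) * norm (a - b)" .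
    qed
  qed simp
qed

lemma step5: "(\<lambda>N. (\<Sum>n<N. cinner ((U^^n) x) y) / of_nat N) \<longlonglongrightarrow> cinner x \<Omega> * cinner \<Omega> y"
proof -
  have e1: "Re ((\<Sum>n<N. cinner ((U^^n) x) y) / of_nat N) = inner (T N x) y" for N
    by (simp add: T_inner cinner_def)
  have e2: "Re (cinner x \<Omega> * cinner \<Omega> y) = l x y" by (simp add: l_def)
  have e3: "Im ((\<Sum>n<N. cinner ((U^^n) x) y) / of_nat N) = inner (T N x) (cJ y)" for N
    by (simp add: T_inner cinner_def)
  have e4: "Im (cinner x \<Omega> * cinner \<Omega> y) = l x (cJ y)"
    by (simp add: l_def cinner_def cJ_cJ)
  show ?thesis unfolding tendsto_complex_iff e1 e2 e3 e4 using step4 by blast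
qed

lemma main_lemma:
  assumes h: "\<forall>i<k. A i \<in> commutant (commutant \<A>) \<and> B i \<in> commutant \<A>"
  shows "(\<lambda>N. (\<Sum>n<N. \<Sum>i<k.
                   cinner (((U^^n) \<circ> A i \<circ> (adjoint U^^n) \<circ>
                            (U^^(2*n)) \<circ> B i \<circ> (adjoint U^^(2*n))) \<Omega>) \<Omega>) / of_nat N)
             \<longlonglongrightarrow> (\<Sum>i<k. cinner (A i \<Omega>) \<Omega> * cinner (B i \<Omega>) \<Omega>)"
proof -
  have tm: "cinner (((U^^n) \<circ> A i \<circ> (adjoint U^^n) \<circ>
                            (U^^(2*n)) \<circ> B i \<circ> (adjoint U^^(2*n))) \<Omega>) \<Omega>
          = cinner ((U^^n) (B i \<Omega>)) (adjoint (A i) \<Omega>)" if i: "i < k" for i n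
  proof -
    have bA: "bop (A i)" using h i by (simp add: commutant_def)
    have "(((U^^n) \<circ> A i \<circ> (adjoint U^^n) \<circ> (U^^(2*n)) \<circ> B i \<circ> (adjoint U^^(2*n))) \<Omega>)
          = (U^^n) (A i ((U^^n) (B i \<Omega>)))" by (simp add: Vn_Omega VnU2n)
    hence "cinner (((U^^n) \<circ> A i \<circ> (adjoint U^^n) \<circ> (U^^(2*n)) \<circ> B i \<circ> (adjoint U^^(2*n))) \<Omega>) \<Omega>
          = cinner (A i ((U^^n) (B i \<Omega>))) \<Omega>" by (simp add: Un_cinner)
    also have "\<dots> = cinner ((U^^n) (B i \<Omega>)) (adjoint (A i) \<Omega>)" by (rule bop_adj[OF bA])
    finally show ?thesis .
  qed
  have eq: "(\<Sum>n<N. \<Sum>i<k.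
                   cinner (((U^^n) \<circ> A i \<circ> (adjoint U^^n) \<circ>
                            (U^^(2*n)) \<circ> B i \<circ> (adjoint U^^(2*n))) \<Omega>) \<Omega>) / of_nat N
       = (\<Sum>i<k. (\<Sum>n<N. cinner ((U^^n) (B i \<Omega>)) (adjoint (A i) \<Omega>)) / of_nat N)" for N
  proof -
    have "(\<Sum>n<N. \<Sum>i<k.
                   cinner (((U^^n) \<circ> A i \<circ> (adjoint U^^n) \<circ>
                            (U^^(2*n)) \<circ> B i \<circ> (adjoint U^^(2*n))) \<Omega>) \<Omega>)
        = (\<Sum>n<N. \<Sum>i<k. cinner ((U^^n) (B i \<Omega>)) (adjoint (A i) \<Omega>))"
      by (intro sum.cong refl tm) simp_all
    also have "\<dots> = (\<Sum>i<k. \<Sum>n<N. cinner ((U^^n) (B i \<Omega>)) (adjoint (A i) \<Omega>))"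
      by (rule sum.swap)
    finally show ?thesis by (simp add: sum_divide_distrib)
  qed
  have lim: "(\<lambda>N. (\<Sum>n<N. cinner ((U^^n) (B i \<Omega>)) (adjoint (A i) \<Omega>)) / of_nat N)
        \<longlonglongrightarrow> cinner (A i \<Omega>) \<Omega> * cinner (B i \<Omega>) \<Omega>" if i: "i \<in> {..<k}" for i
  proof -
    have bA: "bop (A i)" using h i by (simp add: commutant_def)
    have e: "cinner (B i \<Omega>) \<Omega> * cinner \<Omega> (adjoint (A i) \<Omega>) = cinner (A i \<Omega>) \<Omega> * cinner (B i \<Omega>) \<Omega>"
      by (simp add: bop_adj[OF bA] mult.commute)
    show ?thesis using step5[of "B i \<Omega>" "adjoint (A i) \<Omega>"] unfolding e .
  qed
  show ?thesis unfolding eq by (rule tendsto_sum[OF lim])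
qed

end

theorem proposition5p1:
  fixes \<A> :: "('h::complex_hilbert \<Rightarrow> 'h) set"
    and U :: "'h \<Rightarrow> 'h"
    and \<Omega> :: 'h
  assumes cstar: "concrete_cstar \<A>"
    and unit_vec: "norm \<Omega> = 1"
    and cyclic: "closure {A \<Omega> | A. A \<in> \<A>} = UNIV"
    and unitary: "unitary_op U"
    and inv_vec: "U \<Omega> = \<Omega>"
    and aut: "\<forall>A\<in>\<A>. U \<circ> A \<circ> adjoint U \<in> \<A> \<and> adjoint U \<circ> A \<circ> U \<in> \<A>"
    and ergodic: "\<forall>A\<in>\<A>. \<forall>B\<in>\<A>.
        (\<lambda>N. (\<Sum>n<N. cinner (A ((U^^n) (B \<Omega>))) \<Omega>) / of_nat N)
          \<longlonglongrightarrow> cinner (A \<Omega>) \<Omega> * cinner (B \<Omega>) \<Omega>"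
    and separating: "\<forall>T\<in>commutant (commutant \<A>). T \<Omega> = 0 \<longrightarrow> T = (\<lambda>x. 0)"
  shows "\<forall>(k::nat) (A :: nat \<Rightarrow> 'h \<Rightarrow> 'h) (B :: nat \<Rightarrow> 'h \<Rightarrow> 'h).
           (\<forall>i<k. A i \<in> commutant (commutant \<A>) \<and> B i \<in> commutant \<A>) \<longrightarrow>
           (\<lambda>N. (\<Sum>n<N. \<Sum>i<k.
                   cinner (((U^^n) \<circ> A i \<circ> (adjoint U^^n) \<circ>
                            (U^^(2*n)) \<circ> B i \<circ> (adjoint U^^(2*n))) \<Omega>) \<Omega>) / of_nat N)
             \<longlonglongrightarrow> (\<Sum>i<k. cinner (A i \<Omega>) \<Omega> * cinner (B i \<Omega>) \<Omega>)"
proof (intro allI impI)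
  fix k and A B :: "nat \<Rightarrow> 'h \<Rightarrow> 'h"
  assume "\<forall>i<k. A i \<in> commutant (commutant \<A>) \<and> B i \<in> commutant \<A>"
  thus "(\<lambda>N. (\<Sum>n<N. \<Sum>i<k.
                   cinner (((U^^n) \<circ> A i \<circ> (adjoint U^^n) \<circ>
                            (U^^(2*n)) \<circ> B i \<circ> (adjoint U^^(2*n))) \<Omega>) \<Omega>) / of_nat N)
             \<longlonglongrightarrow> (\<Sum>i<k. cinner (A i \<Omega>) \<Omega> * cinner (B i \<Omega>) \<Omega>)"
    by (rule main_lemma[OF cstar unit_vec cyclic unitary inv_vec ergodic])
qed

end
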